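(* Let $a>0$. The frame $e=\{e_0,e_1,e_2,e_3,e_4\}$ on $B_a^>$ defined by $e_0=\frac{\partial}{\partial x_0}-\frac{2x_0}{r}\cdot\frac{a^4r_o^2}{1+\beta}\,T$, $e_1=\frac{\partial}{\partial r}+\frac{r^2+x_0^2}{r^2}\cdot\frac{a^4r_o^2}{1+\beta}\,T$, $e_2=r^{-1}\frac{\partial}{\partial\sigma_1}$, $e_3=r^{-1}\frac{\partial}{\partial\sigma_2}$, $e_4=(r\beta)^{-1}\frac{\partial}{\partial\sigma_3}$, where $T=-(r^2+x_0^2)\frac{\partial}{\partial r}-2rx_0\frac{\partial}{\partial x_0}$, is a pointwise $g_a$-orthonormal frame on $B_a^>$ and is of class $C^1$.
   Context: On $\mathbb{R}^5$ use coordinates $x=(x_0,\dots,x_4)$, $r=\sqrt{x_1^2+x_2^2+x_3^2+x_4^2}$, Minkowski metric $g_0=-dx_0^2+\sum_{i=1}^4dx_i^2$. On $\{r>0\}$ define $\sigma_1=\frac{1}{r^2}(-x_2dx_1+x_1dx_2-x_4dx_3+x_3dx_4)$, $\sigma_2=\frac{1}{r^2}(-x_3dx_1+x_4dx_2+x_1dx_3-x_2dx_4)$, $\sigma_3=\frac{1}{r^2}(-x_4dx_1-x_3dx_2+x_2dx_3+x_1dx_4)$, so $g_0=-dx_0^2+dr^2+r^2(\sigma_1^2+\sigma_2^2+\sigma_3^2)$. The vector fields $\frac{\partial}{\partial\sigma_i}$ ($i=1,2,3$) on $\{r>0\}$ are the ones annihilated by $dx_0$ and $dr$ with $\sigma_j(\frac{\partial}{\partial\sigma_i})=\delta_{ij}$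 (the frame dual to $\sigma_1,\sigma_2,\sigma_3$ along the spheres), and $\frac{\partial}{\partial r}$, $\frac{\partial}{\partial x_0}$ are the coordinate fields of the cylindrical coordinates $(x_0,r,\text{point of }S^3)$. Let $L=\{r\le|x_0|\}$, $L_o=\{r=|x_0|\}$; $r_o=0$ on $L$ and $r_o=(r^2-x_0^2)/r$ elsewhere. For $a>0$: $B_a=\{0<r_o<1/a\}$, $\tilde{B}_a=B_a\cup L$, $B_a^>=\tilde{B}_a\setminus\{r=0\}$, $\beta=\sqrt{1-(ar_o)^4}$, $\alpha=(r^2+x_0^2)dr-2x_0r\,dx_0$, and $g_a=g_0-r^2(ar_o)^4\sigma_3^2+a^4(r\beta)^{-2}r_o^2\alpha^2$ on $B_a^>$, $g_a=g_0$ on $\{r=0\}$. Orthonormal means $g_a(e_0,e_0)=-1$, $g_a(e_i,e_i)=1$ for $i\ge1$, $g_a(e_i,e_j)=0$ for $i\ne j$. *)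

theory Defs
  imports "HOL-Analysis.Analysis"
begin

text \<open>Points of R^5 are vectors p :: real^5 with coordinates p$0,...,p$4.
  Tangent vectors are also elements of real^5 (standard coordinates).\<close>

definition rad :: "real^5 \<Rightarrow> real" where
  "rad p = sqrt ((p$1)^2 + (p$2)^2 + (p$3)^2 + (p$4)^2)"

definition Lcone :: "(real^5) set" where
  "Lcone = {p. rad p \<le> \<bar>p$0\<bar>}"

definition ro :: "real^5 \<Rightarrow> real" where
  "ro p = (if p \<in> Lcone then 0 else ((rad p)^2 - (p$0)^2) / rad p)"

definition Ba :: "real \<Rightarrow> (real^5) set" where
  "Ba a = {p. 0 < ro p \<and> ro p < 1 / a}"

definition Ba_tilde :: "real \<Rightarrow> (real^5) set" where
  "Ba_tilde a = Ba a \<union> Lcone"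

definition Ba_gt :: "real \<Rightarrow> (real^5) set" where
  "Ba_gt a = Ba_tilde a - {p. rad p = 0}"

definition beta :: "real \<Rightarrow> real^5 \<Rightarrow> real" where
  "beta a p = sqrt (1 - (a * ro p)^4)"

text \<open>One-forms, as functions of the base point and the tangent vector.\<close>

definition dx0 :: "real^5 \<Rightarrow> real^5 \<Rightarrow> real" where
  "dx0 p v = v$0"

definition dr :: "real^5 \<Rightarrow> real^5 \<Rightarrow> real" where
  "dr p v = (p$1 * v$1 + p$2 * v$2 + p$3 * v$3 + p$4 * v$4) / rad p"

definition sigma1 :: "real^5 \<Rightarrow> real^5 \<Rightarrow> real" where
  "sigma1 p v = (- p$2 * v$1 + p$1 * v$2 - p$4 * v$3 + p$3 * v$4) / (rad p)^2"

definition sigma2 :: "real^5 \<Rightarrow> real^5 \<Rightarrow> real" where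
  "sigma2 p v = (- p$3 * v$1 + p$4 * v$2 + p$1 * v$3 - p$2 * v$4) / (rad p)^2"

definition sigma3 :: "real^5 \<Rightarrow> real^5 \<Rightarrow> real" where
  "sigma3 p v = (- p$4 * v$1 - p$3 * v$2 + p$2 * v$3 + p$1 * v$4) / (rad p)^2"

definition coframe :: "real^5 \<Rightarrow> nat \<Rightarrow> real^5 \<Rightarrow> real" where
  "coframe p k v =
     (if k = 0 then dx0 p v else if k = 1 then dr p v else if k = 2 then sigma1 p v
      else if k = 3 then sigma2 p v else sigma3 p v)"

definition cyl_frame :: "real^5 \<Rightarrow> nat \<Rightarrow> real^5" where
  "cyl_frame p k = (THE w. \<forall>j<5. coframe p j w = (if j = k then 1 else 0))"

definition d_x0 :: "real^5 \<Rightarrow> real^5" where "d_x0 p = cyl_frame p 0"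
definition d_r :: "real^5 \<Rightarrow> real^5" where "d_r p = cyl_frame p 1"
definition d_sigma1 :: "real^5 \<Rightarrow> real^5" where "d_sigma1 p = cyl_frame p 2"
definition d_sigma2 :: "real^5 \<Rightarrow> real^5" where "d_sigma2 p = cyl_frame p 3"
definition d_sigma3 :: "real^5 \<Rightarrow> real^5" where "d_sigma3 p = cyl_frame p 4"

definition g0 :: "real^5 \<Rightarrow> real^5 \<Rightarrow> real" where
  "g0 u v = - u$0 * v$0 + u$1 * v$1 + u$2 * v$2 + u$3 * v$3 + u$4 * v$4"

definition alpha :: "real^5 \<Rightarrow> real^5 \<Rightarrow> real" where
  "alpha p v = ((rad p)^2 + (p$0)^2) * dr p v - 2 * p$0 * rad p * dx0 p v"

definition g_a :: "real \<Rightarrow> real^5 \<Rightarrow> real^5 \<Rightarrow> real^5 \<Rightarrow> real" where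
  "g_a a p u v =
     (if rad p = 0 then g0 u v
      else g0 u v - (rad p)^2 * (a * ro p)^4 * sigma3 p u * sigma3 p v
           + a^4 * inverse ((rad p * beta a p)^2) * (ro p)^2 * alpha p u * alpha p v)"

definition T_field :: "real^5 \<Rightarrow> real^5" where
  "T_field p = (- ((rad p)^2 + (p$0)^2)) *\<^sub>R d_r p - (2 * rad p * p$0) *\<^sub>R d_x0 p"

definition frame_e :: "real \<Rightarrow> real^5 \<Rightarrow> nat \<Rightarrow> real^5" where
  "frame_e a p k =
     (if k = 0 then d_x0 p - ((2 * p$0 / rad p) * (a^4 * (ro p)^2 / (1 + beta a p))) *\<^sub>R T_field p
      else if k = 1 then d_r p + (((rad p)^2 + (p$0)^2) / (rad p)^2 * (a^4 * (ro p)^2 / (1 + beta a p))) *\<^sub>R T_field p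
      else if k = 2 then inverse (rad p) *\<^sub>R d_sigma1 p
      else if k = 3 then inverse (rad p) *\<^sub>R d_sigma2 p
      else inverse (rad p * beta a p) *\<^sub>R d_sigma3 p)"

definition orthonormal_wrt :: "(real^5 \<Rightarrow> real^5 \<Rightarrow> real) \<Rightarrow> (nat \<Rightarrow> real^5) \<Rightarrow> bool" where
  "orthonormal_wrt g e \<longleftrightarrow>
     (\<forall>i<5. \<forall>j<5. g (e i) (e j) = (if i \<noteq> j then 0 else if i = 0 then -1 else 1))"

definition C1_on :: "('a::real_normed_vector) set \<Rightarrow> ('a \<Rightarrow> 'b::real_normed_vector) \<Rightarrow> bool" where
  "C1_on S f \<longleftrightarrow>
     (\<exists>f'. (\<forall>x\<in>S. (f has_derivative blinfun_apply (f' x)) (at x)) \<and> continuous_on S f')"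

end

theory Submission
  imports Defs
begin


lemma exhaust_5:
  fixes x :: 5
  shows "x = 0 \<or> x = 1 \<or> x = 2 \<or> x = 3 \<or> x = 4"
proof (induct x)
  case (of_int z)
  then have "z = 0 \<or> z = 1 \<or> z = 2 \<or> z = 3 \<or> z = 4" by fastforce
  then show ?case by auto
qed

lemma forall_5: "(\<forall>i::5. P i) \<longleftrightarrow> P 0 \<and> P 1 \<and> P 2 \<and> P 3 \<and> P 4"
  by (metis exhaust_5)

lemma vec5_eq: "(x::real^5) = y \<longleftrightarrow> x$0 = y$0 \<and> x$1 = y$1 \<and> x$2 = y$2 \<and> x$3 = y$3 \<and> x$4 = y$4"
  by (simp add: vec_eq_iff forall_5)

lemma five_neq[simp]: "(0::5) \<noteq> 1" "(0::5) \<noteq> 2" "(0::5) \<noteq> 3" "(0::5) \<noteq> 4"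
  "(1::5) \<noteq> 2" "(1::5) \<noteq> 3" "(1::5) \<noteq> 4" "(2::5) \<noteq> 3" "(2::5) \<noteq> 4" "(3::5) \<noteq> 4"
  "(1::5) \<noteq> 0" "(2::5) \<noteq> 0" "(3::5) \<noteq> 0" "(4::5) \<noteq> 0"
  "(2::5) \<noteq> 1" "(3::5) \<noteq> 1" "(4::5) \<noteq> 1" "(3::5) \<noteq> 2" "(4::5) \<noteq> 2" "(4::5) \<noteq> 3"
  by simp_all

lemma rad_sq: "(rad p)^2 = (p$1)^2 + (p$2)^2 + (p$3)^2 + (p$4)^2"
  unfolding rad_def by (simp add: add_nonneg_nonneg)

lemma rad_nonneg: "rad p \<ge> 0" unfolding rad_def by simp

definition mk5 :: "real \<Rightarrow> real \<Rightarrow> real \<Rightarrow> real \<Rightarrow> real \<Rightarrow> real^5" where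
  "mk5 a b c d e = (\<chi> i. if i = 0 then a else if i = 1 then b else if i = 2 then c else if i = 3 then d else e)"

lemma mk5_nth[simp]: "mk5 a b c d e $ 0 = a" "mk5 a b c d e $ 1 = b" "mk5 a b c d e $ 2 = c"
  "mk5 a b c d e $ 3 = d" "mk5 a b c d e $ 4 = e"
  by (simp_all add: mk5_def)

definition Ecyl :: "real^5 \<Rightarrow> nat \<Rightarrow> real^5" where
  "Ecyl p k = (if k = 0 then mk5 1 0 0 0 0
     else if k = 1 then mk5 0 (p$1 / rad p) (p$2 / rad p) (p$3 / rad p) (p$4 / rad p)
     else if k = 2 then mk5 0 (- p$2) (p$1) (- p$4) (p$3)
     else if k = 3 then mk5 0 (- p$3) (p$4) (p$1) (- p$2)
     else mk5 0 (- p$4) (- p$3) (p$2) (p$1))"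

definition Rc :: "real^5 \<Rightarrow> real^5 \<Rightarrow> real^5" where "Rc p w = mk5 (dx0 p w) (dr p w * p$1 / rad p + sigma1 p w * (- p$2) + sigma2 p w * (- p$3) + sigma3 p w * (- p$4))
     (dr p w * p$2 / rad p + sigma1 p w * (p$1) + sigma2 p w * (p$4) + sigma3 p w * (- p$3))
     (dr p w * p$3 / rad p + sigma1 p w * (- p$4) + sigma2 p w * (p$1) + sigma3 p w * (p$2))
     (dr p w * p$4 / rad p + sigma1 p w * (p$3) + sigma2 p w * (- p$2) + sigma3 p w * (p$1))"

lemma recon:
  assumes "rad p \<noteq> 0"
  shows "w = Rc p w"
proof -
  have r2: "(rad p)^2 = (p$1)^2 + (p$2)^2 + (p$3)^2 + (p$4)^2" by (rule rad_sq)
  have rr: "rad p * rad p = (p$1)^2 + (p$2)^2 + (p$3)^2 + (p$4)^2" using r2 by (simp add: power2_eq_square)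
  show ?thesis
    unfolding vec5_eq Rc_def using assms
    apply (simp add: dx0_def dr_def sigma1_def sigma2_def sigma3_def divide_simps)
    apply (simp add: rr power2_eq_square algebra_simps)
    done
qed



lemma Ecyl_co_all:
  assumes "rad p \<noteq> 0"
  shows "dx0 p (Ecyl p 0) = 1" "dr p (Ecyl p 0) = 0" "sigma1 p (Ecyl p 0) = 0" "sigma2 p (Ecyl p 0) = 0" "sigma3 p (Ecyl p 0) = 0"
   "dx0 p (Ecyl p 1) = 0" "dr p (Ecyl p 1) = 1" "sigma1 p (Ecyl p 1) = 0" "sigma2 p (Ecyl p 1) = 0" "sigma3 p (Ecyl p 1) = 0"
   "dx0 p (Ecyl p 2) = 0" "dr p (Ecyl p 2) = 0" "sigma1 p (Ecyl p 2) = 1" "sigma2 p (Ecyl p 2) = 0" "sigma3 p (Ecyl p 2) = 0"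
   "dx0 p (Ecyl p 3) = 0" "dr p (Ecyl p 3) = 0" "sigma1 p (Ecyl p 3) = 0" "sigma2 p (Ecyl p 3) = 1" "sigma3 p (Ecyl p 3) = 0"
   "dx0 p (Ecyl p 4) = 0" "dr p (Ecyl p 4) = 0" "sigma1 p (Ecyl p 4) = 0" "sigma2 p (Ecyl p 4) = 0" "sigma3 p (Ecyl p 4) = 1"
proof -
  have rr: "rad p * rad p = (p$1)^2 + (p$2)^2 + (p$3)^2 + (p$4)^2" using rad_sq[of p] by (simp add: power2_eq_square)
  have r2: "(rad p)^2 = (p$1)^2 + (p$2)^2 + (p$3)^2 + (p$4)^2" using rad_sq[of p] .
  have nz: "p$1*p$1 + p$2*p$2 + p$3*p$3 + p$4*p$4 \<noteq> 0" using assms rr by (metis mult_eq_0_iff power2_eq_square)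
  note defs = Ecyl_def dx0_def dr_def sigma1_def sigma2_def sigma3_def
  show "dx0 p (Ecyl p 0) = 1" "dr p (Ecyl p 0) = 0" "sigma1 p (Ecyl p 0) = 0" "sigma2 p (Ecyl p 0) = 0" "sigma3 p (Ecyl p 0) = 0"
    by (simp_all add: defs)
  show "dx0 p (Ecyl p 1) = 0" by (simp add: defs)
  show "dr p (Ecyl p 1) = 1" using assms nz by (simp add: defs divide_simps rr power2_eq_square)
  show "sigma1 p (Ecyl p 1) = 0" "sigma2 p (Ecyl p 1) = 0" "sigma3 p (Ecyl p 1) = 0"
    using assms by (simp_all add: defs divide_simps algebra_simps)
  show "dx0 p (Ecyl p 2) = 0" "dr p (Ecyl p 2) = 0" "sigma1 p (Ecyl p 2) = 1" "sigma2 p (Ecyl p 2) = 0" "sigma3 p (Ecyl p 2) = 0"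
    using assms nz by (simp_all add: defs divide_simps algebra_simps rr power2_eq_square)
  show "dx0 p (Ecyl p 3) = 0" "dr p (Ecyl p 3) = 0" "sigma1 p (Ecyl p 3) = 0" "sigma2 p (Ecyl p 3) = 1" "sigma3 p (Ecyl p 3) = 0"
    using assms nz by (simp_all add: defs divide_simps algebra_simps rr power2_eq_square)
  show "dx0 p (Ecyl p 4) = 0" "dr p (Ecyl p 4) = 0" "sigma1 p (Ecyl p 4) = 0" "sigma2 p (Ecyl p 4) = 0" "sigma3 p (Ecyl p 4) = 1"
    using assms nz by (simp_all add: defs divide_simps algebra_simps rr power2_eq_square)
qed


lemma Ecyl_co:
  assumes "rad p \<noteq> 0" "j < 5" "k < 5"
  shows "coframe p j (Ecyl p k) = (if j = k then 1 else 0)"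
proof -
  have "j = 0 \<or> j = 1 \<or> j = 2 \<or> j = 3 \<or> j = 4" "k = 0 \<or> k = 1 \<or> k = 2 \<or> k = 3 \<or> k = 4" using assms by (auto simp: numeral_eq_Suc less_Suc_eq)
  then show ?thesis using Ecyl_co_all[OF assms(1)]
    by (elim disjE) (simp_all add: coframe_def)
qed

lemma cyl_frame_eq:
  assumes "rad p \<noteq> 0" "k < 5"
  shows "cyl_frame p k = Ecyl p k"
  unfolding cyl_frame_def
proof (rule the_equality)
  show "\<forall>j<5. coframe p j (Ecyl p k) = (if j = k then 1 else 0)" using Ecyl_co assms by auto
next
  fix w assume w: "\<forall>j<5. coframe p j w = (if j = k then 1 else 0)"
  have c: "coframe p j w = coframe p j (Ecyl p k)" if "j < 5" for j using w Ecyl_co assms that by auto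
  have e: "dx0 p w = dx0 p (Ecyl p k)" "dr p w = dr p (Ecyl p k)" "sigma1 p w = sigma1 p (Ecyl p k)"
    "sigma2 p w = sigma2 p (Ecyl p k)" "sigma3 p w = sigma3 p (Ecyl p k)"
    using c[of 0] c[of 1] c[of 2] c[of 3] c[of 4] by (simp_all add: coframe_def)
  show "w = Ecyl p k"
  proof -
    have "Rc p w = Rc p (Ecyl p k)" unfolding Rc_def by (simp only: e)
    then show ?thesis using recon[OF assms(1), of w] recon[OF assms(1), of "Ecyl p k"] by simp
  qed
qed


lemma g0_poly:
  fixes xp xq R RR s1 sa s2 sb s3 sc y1 y2 y3 y4 ri r2 :: real
  assumes "ri * ri * r2 = 1" "r2 = y1^2 + y2^2 + y3^2 + y4^2"
  shows "- xp  *  xq + (R * y1 * ri + s1 * (-y2) + s2 * (-y3) + s3 * (-y4))  *  (RR * y1 * ri + sa * (-y2) + sb * (-y3) + sc * (-y4))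
    + (R * y2 * ri + s1 * y1 + s2 * y4 + s3 * (-y3))  *  (RR * y2 * ri + sa * y1 + sb * y4 + sc * (-y3))
    + (R * y3 * ri + s1 * (-y4) + s2 * y1 + s3 * y2)  *  (RR * y3 * ri + sa * (-y4) + sb * y1 + sc * y2)
    + (R * y4 * ri + s1 * y3 + s2 * (-y2) + s3 * y1)  *  (RR * y4 * ri + sa * y3 + sb * (-y2) + sc * y1)
    = - xp  *  xq + R  *  RR + r2  *  (s1 * sa + s2 * sb + s3 * sc)"
  using assms by algebra

lemma g0_coord:
  assumes "rad p \<noteq> 0"
  shows "g0 u v = - dx0 p u * dx0 p v + dr p u * dr p v
     + (rad p)^2 * (sigma1 p u * sigma1 p v + sigma2 p u * sigma2 p v + sigma3 p u * sigma3 p v)"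
proof -
  have e: "g0 u v = g0 (Rc p u) (Rc p v)" using recon[OF assms, of u] recon[OF assms, of v] by simp
  have h1: "inverse (rad p) * inverse (rad p) * (rad p)^2 = 1" using assms by (simp add: power2_eq_square field_simps)
  have dv: "\<And>z w. z * w / rad p = z * w * inverse (rad p)" by (simp add: divide_inverse)
  show ?thesis unfolding e
    unfolding g0_def Rc_def mk5_nth dv
    by (rule g0_poly[OF h1 rad_sq])
qed

lemma lin_all:
  "dx0 p (u + v) = dx0 p u + dx0 p v" "dx0 p (u - v) = dx0 p u - dx0 p v" "dx0 p (c *\<^sub>R u) = c * dx0 p u"
  "dr p (u + v) = dr p u + dr p v" "dr p (u - v) = dr p u - dr p v" "dr p (c *\<^sub>R u) = c * dr p u"
  "sigma1 p (u + v) = sigma1 p u + sigma1 p v" "sigma1 p (u - v) = sigma1 p u - sigma1 p v" "sigma1 p (c *\<^sub>R u) = c * sigma1 p u"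
  "sigma2 p (u + v) = sigma2 p u + sigma2 p v" "sigma2 p (u - v) = sigma2 p u - sigma2 p v" "sigma2 p (c *\<^sub>R u) = c * sigma2 p u"
  "sigma3 p (u + v) = sigma3 p u + sigma3 p v" "sigma3 p (u - v) = sigma3 p u - sigma3 p v" "sigma3 p (c *\<^sub>R u) = c * sigma3 p u"
  by (simp_all add: dx0_def dr_def sigma1_def sigma2_def sigma3_def add_divide_distrib diff_divide_distrib algebra_simps)


definition Gf :: "real \<Rightarrow> real \<Rightarrow> real \<Rightarrow> real \<Rightarrow> real*real*real*real*real \<Rightarrow> real*real*real*real*real \<Rightarrow> real" where
  "Gf r x q K u v = (case u of (u0,u1,u2,u3,u4) \<Rightarrow> case v of (v0,v1,v2,v3,v4) \<Rightarrow>
     - u0 * v0 + u1 * v1 + r^2 * (u2 * v2 + u3 * v3 + u4 * v4) - r^2 * q * u4 * v4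
     + K * ((r^2 + x^2) * u1 - 2 * x * r * u0) * ((r^2 + x^2) * v1 - 2 * x * r * v0))"

definition co :: "real^5 \<Rightarrow> real^5 \<Rightarrow> real*real*real*real*real" where
  "co p u = (dx0 p u, dr p u, sigma1 p u, sigma2 p u, sigma3 p u)"

lemma g_a_coord:
  assumes "rad p \<noteq> 0"
  shows "g_a a p u v = Gf (rad p) (p$0) ((a * ro p)^4) (a^4 * inverse ((rad p * beta a p)^2) * (ro p)^2) (co p u) (co p v)"
  using assms unfolding g_a_def Gf_def co_def alpha_def g0_coord[OF assms]
  by (simp add: algebra_simps)

lemma frame_co:
  fixes a :: real and p :: "real^5"
  assumes "rad p \<noteq> 0"
  defines "s \<equiv> (2 * p$0 / rad p) * (a^4 * (ro p)^2 / (1 + beta a p))"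
    and "t \<equiv> ((rad p)^2 + (p$0)^2) / (rad p)^2 * (a^4 * (ro p)^2 / (1 + beta a p))"
  shows "co p (frame_e a p 0) = (1 + s * (2 * rad p * p$0), s * ((rad p)^2 + (p$0)^2), 0, 0, 0)"
    "co p (frame_e a p 1) = (- (t * (2 * rad p * p$0)), 1 - t * ((rad p)^2 + (p$0)^2), 0, 0, 0)"
    "co p (frame_e a p 2) = (0, 0, inverse (rad p), 0, 0)"
    "co p (frame_e a p 3) = (0, 0, 0, inverse (rad p), 0)"
    "co p (frame_e a p 4) = (0, 0, 0, 0, inverse (rad p * beta a p))"
  using assms(1) unfolding co_def frame_e_def T_field_def d_x0_def d_r_def d_sigma1_def d_sigma2_def d_sigma3_def
    s_def[symmetric] t_def[symmetric]
  by (simp_all add: cyl_frame_eq[OF assms(1)] lin_all Ecyl_co_all[OF assms(1)] Ecyl_co_all[OF assms(1), unfolded One_nat_def] algebra_simps)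


definition Ev :: "real \<Rightarrow> real \<Rightarrow> real \<Rightarrow> real \<Rightarrow> real \<Rightarrow> nat \<Rightarrow> real*real*real*real*real" where
  "Ev r x b s t k = (if k = 0 then (1 + s * (2 * r * x), s * (r^2 + x^2), 0, 0, 0)
     else if k = 1 then (- (t * (2 * r * x)), 1 - t * (r^2 + x^2), 0, 0, 0)
     else if k = 2 then (0, 0, inverse r, 0, 0)
     else if k = 3 then (0, 0, 0, inverse r, 0)
     else (0, 0, 0, 0, inverse (r * b)))"

lemma Gf_core:
  fixes r x a ro b c K s t q :: real
  assumes h1: "c*ro^2 = 1-b" and h2: "c*(1+b) = a^4*ro^2" and h3: "K*r^2*b^2 = a^4*ro^2"
    and h4: "s*r = 2*x*c" and h5: "ro*r = r^2-x^2 \<or> ro = 0" and h6: "t*r^2 = (r^2+x^2)*c"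
    and r: "r > 0" and b: "b > 0"
  shows "Gf r x q K (Ev r x b s t 0) (Ev r x b s t 0) = -1 \<and>
    Gf r x q K (Ev r x b s t 0) (Ev r x b s t 1) = 0 \<and>
    Gf r x q K (Ev r x b s t 1) (Ev r x b s t 0) = 0 \<and>
    Gf r x q K (Ev r x b s t 1) (Ev r x b s t 1) = 1"
proof (cases "ro = 0")
  case False
  then have h5: "ro*r = r^2-x^2" using h5 by simp
  show ?thesis
    unfolding Gf_def Ev_def using h1 h2 h3 h4 h5 h6 by (simp; intro conjI; algebra)
next
  case True
  then have "b = 1" "c = 0" "K = 0" "s = 0" "t = 0" using h1 h2 h3 h4 h6 r b by auto
  then show ?thesis
    unfolding Gf_def Ev_def by simp
qed

lemma Gf_ortho:
  fixes r x a ro b c K s t q :: real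
  assumes h1: "c*ro^2 = 1-b" and h2: "c*(1+b) = a^4*ro^2" and h3: "K*r^2*b^2 = a^4*ro^2"
    and h4: "s*r = 2*x*c" and h5: "ro*r = r^2-x^2 \<or> ro = 0" and h6: "t*r^2 = (r^2+x^2)*c"
    and r: "r > 0" and b: "b > 0" and bq: "b^2 = 1 - q"
    and ij: "i < 5" "j < 5"
  shows "Gf r x q K (Ev r x b s t i) (Ev r x b s t j) = (if i \<noteq> j then 0 else if i = 0 then -1 else 1)"
proof -
  note core = Gf_core[OF h1 h2 h3 h4 h5 h6 r b, of q]
  have e4: "r^2 * (inverse (r*b) * inverse (r*b)) - r^2 * q * inverse (r*b) * inverse (r*b) = 1"
  proof -
    have "r^2 * (inverse (r*b) * inverse (r*b)) - r^2 * q * inverse (r*b) * inverse (r*b) = (1 - q) / b^2"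
      using r b by (simp add: field_simps power2_eq_square)
    moreover have "(1 - q) / b^2 = 1" unfolding bq[symmetric] using b by simp
    ultimately show ?thesis by simp
  qed
  have "i = 0 \<or> i = 1 \<or> i = 2 \<or> i = 3 \<or> i = 4" "j = 0 \<or> j = 1 \<or> j = 2 \<or> j = 3 \<or> j = 4"
    using ij by (auto simp: numeral_eq_Suc less_Suc_eq)
  then show ?thesis using core e4 r
    by (elim disjE) (simp_all add: Gf_def Ev_def power2_eq_square field_simps)
qed


lemma Bgt_facts:
  assumes a: "a > 0" and p: "p \<in> Ba_gt a"
  shows "rad p > 0" "ro p \<ge> 0" "a * ro p < 1" "ro p * rad p = (rad p)^2 - (p$0)^2 \<or> ro p = 0"
proof -
  have r0: "rad p \<noteq> 0" and pin: "p \<in> Ba a \<or> p \<in> Lcone" using p unfolding Ba_gt_def Ba_tilde_def by auto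
  then show "rad p > 0" using rad_nonneg[of p] by simp
  show "ro p \<ge> 0" "a * ro p < 1" "ro p * rad p = (rad p)^2 - (p$0)^2 \<or> ro p = 0"
  proof (atomize(full), cases "p \<in> Lcone")
    case True
    then show "0 \<le> ro p \<and> a * ro p < 1 \<and> (ro p * rad p = (rad p)^2 - (p$0)^2 \<or> ro p = 0)" by (simp add: ro_def)
  next
    case False
    then have "p \<in> Ba a" using pin by simp
    then have "0 < ro p" "ro p < 1 / a" unfolding Ba_def by auto
    moreover have "ro p * rad p = (rad p)^2 - (p$0)^2" using False r0 by (simp add: ro_def)
    ultimately show "0 \<le> ro p \<and> a * ro p < 1 \<and> (ro p * rad p = (rad p)^2 - (p$0)^2 \<or> ro p = 0)"
      using a by (simp add: field_simps)
  qed
qed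

lemma beta_facts:
  assumes "ro p \<ge> 0" "a * ro p < 1" "a > 0"
  shows "beta a p > 0" "(beta a p)^2 = 1 - (a * ro p)^4"
proof -
  have "0 \<le> a * ro p" using assms by simp
  then have "(a * ro p)^4 < 1" using assms(2) by (simp add: power_less_one_iff)
  then show "beta a p > 0" "(beta a p)^2 = 1 - (a * ro p)^4" unfolding beta_def by simp_all
qed

lemma orthonormal_part:
  assumes a: "a > 0" and p: "p \<in> Ba_gt a"
  shows "orthonormal_wrt (g_a a p) (frame_e a p)"
proof -
  note F = Bgt_facts[OF a p]
  define r where "r = rad p"
  define x where "x = p$0"
  define b where "b = beta a p"
  define ro' where "ro' = ro p"
  define q where "q = (a * ro p)^4"
  define K where "K = a^4 * inverse ((rad p * beta a p)^2) * (ro p)^2"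
  define c where "c = a^4 * (ro p)^2 / (1 + beta a p)"
  define s where "s = (2 * p$0 / rad p) * (a^4 * (ro p)^2 / (1 + beta a p))"
  define t where "t = ((rad p)^2 + (p$0)^2) / (rad p)^2 * (a^4 * (ro p)^2 / (1 + beta a p))"
  have r: "r > 0" using F r_def by simp
  have b: "b > 0" and bb: "b^2 = 1 - q" using beta_facts[OF F(2) F(3) a] b_def q_def by simp_all
  have h1: "c*ro'^2 = 1-b"
  proof -
    have "c*ro'^2 = q / (1 + b)" using b by (simp add: c_def ro'_def q_def b_def field_simps power_mult_distrib)
    also have "\<dots> = (1 - b^2) / (1 + b)" using bb by simp
    also have "\<dots> = 1 - b" using b by (simp add: field_simps power2_eq_square)
    finally show ?thesis .
  qed
  have h2: "c*(1+b) = a^4*ro'^2" using b by (simp add: c_def b_def ro'_def)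
  have h3: "K*r^2*b^2 = a^4*ro'^2" using b r by (simp add: K_def r_def b_def ro'_def field_simps)
  have h4: "s*r = 2*x*c" using r by (simp add: s_def r_def x_def c_def)
  have h5: "ro'*r = r^2-x^2 \<or> ro' = 0" using F(4) by (simp add: ro'_def r_def x_def)
  have h6: "t*r^2 = (r^2+x^2)*c" using r by (simp add: t_def r_def x_def c_def)
  have co: "co p (frame_e a p i) = Ev r x b s t i" if "i < 5" for i
  proof -
    have "i = 0 \<or> i = 1 \<or> i = 2 \<or> i = 3 \<or> i = 4" using that by (auto simp: numeral_eq_Suc less_Suc_eq)
    then show ?thesis using frame_co[of p a] r
      by (elim disjE) (simp_all add: Ev_def r_def x_def b_def s_def t_def)
  qed
  have K': "a^4 * inverse ((rad p * beta a p)^2) * (ro p)^2 = K" by (simp add: K_def)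
  show ?thesis unfolding orthonormal_wrt_def
  proof (intro allI impI)
    fix i j :: nat assume ij: "i < 5" "j < 5"
    have "g_a a p (frame_e a p i) (frame_e a p j) = Gf r x q K (Ev r x b s t i) (Ev r x b s t j)"
      using r by (simp add: g_a_coord co ij K' r_def x_def q_def)
    also have "\<dots> = (if i \<noteq> j then 0 else if i = 0 then -1 else 1)"
      by (rule Gf_ortho[OF h1 h2 h3 h4 h5 h6 r b bb ij])
    finally show "g_a a p (frame_e a p i) (frame_e a p j) = (if i \<noteq> j then 0 else if i = 0 then -1 else 1)" .
  qed
qed



lemma C1_cont: assumes "C1_on S f" shows "continuous_on S f"
proof -
  from assms obtain f' where d: "\<forall>x\<in>S. (f has_derivative blinfun_apply (f' x)) (at x)"
    unfolding C1_on_def by blast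
  show ?thesis
    by (rule continuous_at_imp_continuous_on) (use d has_derivative_continuous in blast)
qed

lemma C1_const: "C1_on S (\<lambda>p::'a::real_normed_vector. c::'b::real_normed_vector)"
  unfolding C1_on_def
proof (rule exI[of _ "\<lambda>x. 0"], intro conjI ballI)
  fix x :: 'a
  have e: "blinfun_apply (0::'a \<Rightarrow>\<^sub>L 'b) = (\<lambda>_. 0)" by (auto simp: zero_blinfun.rep_eq)
  show "((\<lambda>p. c) has_derivative blinfun_apply 0) (at x)" unfolding e by (rule has_derivative_const)
qed simp

lemma C1_nth: "C1_on S (\<lambda>p::real^5. p$i)"
proof -
  have bl: "bounded_linear (\<lambda>v::real^5. v$i)" by (rule bounded_linear_vec_nth)
  show ?thesis unfolding C1_on_def
    apply (rule exI[of _ "\<lambda>x. Blinfun (\<lambda>v::real^5. v$i)"])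
    apply (simp add: bounded_linear_Blinfun_apply[OF bl])
    using bl bounded_linear_imp_has_derivative by blast
qed

lemma C1_add:
  assumes "C1_on S f" "C1_on S g"
  shows "C1_on S (\<lambda>p. f p + g p)"
proof -
  obtain f' where f: "\<forall>x\<in>S. (f has_derivative blinfun_apply (f' x)) (at x)" "continuous_on S f'"
    using assms(1) unfolding C1_on_def by blast
  obtain g' where g: "\<forall>x\<in>S. (g has_derivative blinfun_apply (g' x)) (at x)" "continuous_on S g'"
    using assms(2) unfolding C1_on_def by blast
  show ?thesis unfolding C1_on_def
    apply (rule exI[of _ "\<lambda>x. f' x + g' x"])
    using f g by (auto intro!: continuous_intros derivative_eq_intros simp: plus_blinfun.rep_eq)
qed

lemma C1_scaleR:
  fixes f :: "'a::real_normed_vector \<Rightarrow> real" and G :: "'a \<Rightarrow> 'b::real_normed_vector"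
  assumes "C1_on S f" "C1_on S G"
  shows "C1_on S (\<lambda>p. f p *\<^sub>R G p)"
proof -
  obtain f' where f: "\<forall>x\<in>S. (f has_derivative blinfun_apply (f' x)) (at x)" "continuous_on S f'"
    using assms(1) unfolding C1_on_def by blast
  obtain g' where g: "\<forall>x\<in>S. (G has_derivative blinfun_apply (g' x)) (at x)" "continuous_on S g'"
    using assms(2) unfolding C1_on_def by blast
  have cf: "continuous_on S f" and cg: "continuous_on S G" using C1_cont assms by auto
  show ?thesis unfolding C1_on_def
  proof (rule exI[of _ "\<lambda>x. f x *\<^sub>R g' x + (blinfun_scaleR_left (G x) o\<^sub>L f' x)"], intro conjI ballI)
    fix x assume x: "x \<in> S"
    have "((\<lambda>p. f p *\<^sub>R G p) has_derivative (\<lambda>h. f x *\<^sub>R g' x h + f' x h *\<^sub>R G x)) (at x)"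
      using f(1) g(1) x by (auto intro!: derivative_eq_intros)
    then show "((\<lambda>p. f p *\<^sub>R G p) has_derivative blinfun_apply (f x *\<^sub>R g' x + (blinfun_scaleR_left (G x) o\<^sub>L f' x))) (at x)"
      by (simp add: plus_blinfun.rep_eq scaleR_blinfun.rep_eq)
  next
    show "continuous_on S (\<lambda>x. f x *\<^sub>R g' x + (blinfun_scaleR_left (G x) o\<^sub>L f' x))"
      using f(2) g(2) cf cg by (intro continuous_intros) auto
  qed
qed

lemma C1_comp:
  fixes f :: "'a::real_normed_vector \<Rightarrow> real"
  assumes "C1_on S f" "\<And>x. x \<in> S \<Longrightarrow> f x \<in> U"
    "\<And>y. y \<in> U \<Longrightarrow> (h has_real_derivative h' y) (at y)" "continuous_on U h'"
  shows "C1_on S (\<lambda>p. h (f p))"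
proof -
  obtain f' where f: "\<forall>x\<in>S. (f has_derivative blinfun_apply (f' x)) (at x)" "continuous_on S f'"
    using assms(1) unfolding C1_on_def by blast
  have cf: "continuous_on S f" using C1_cont assms by auto
  show ?thesis unfolding C1_on_def
  proof (rule exI[of _ "\<lambda>x. h' (f x) *\<^sub>R f' x"], intro conjI ballI)
    fix x assume x: "x \<in> S"
    have hd: "(h has_derivative (\<lambda>y. h' (f x) * y)) (at (f x))"
      using assms(3)[OF assms(2)[OF x]] by (simp add: has_field_derivative_imp_has_derivative)
    have "((\<lambda>p. h (f p)) has_derivative (\<lambda>v. h' (f x) * f' x v)) (at x)"
      using has_derivative_compose[OF f(1)[rule_format, OF x] hd] by (simp add: o_def)
    then show "((\<lambda>p. h (f p)) has_derivative blinfun_apply (h' (f x) *\<^sub>R f' x)) (at x)"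
      by (simp add: scaleR_blinfun.rep_eq)
  next
    have "continuous_on S (\<lambda>x. h' (f x))"
      by (rule continuous_on_compose2[OF assms(4) cf]) (use assms(2) in auto)
    then show "continuous_on S (\<lambda>x. h' (f x) *\<^sub>R f' x)"
      using f(2) by (intro continuous_intros) auto
  qed
qed

lemma C1_transfer:
  assumes "C1_on S g" "open S" "\<And>x. x \<in> S \<Longrightarrow> f x = g x"
  shows "C1_on S f"
proof -
  obtain g' where g: "\<forall>x\<in>S. (g has_derivative blinfun_apply (g' x)) (at x)" "continuous_on S g'"
    using assms(1) unfolding C1_on_def by blast
  show ?thesis unfolding C1_on_def
    apply (rule exI[of _ g'])
    using g assms(2,3) has_derivative_transform_within_open[of g _ _ UNIV S f] by (metis eq_commute)
qed


definition mm :: "real \<Rightarrow> real" where "mm y = (max 0 y)^2"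

lemma mm_deriv: "(mm has_real_derivative 2 * max 0 y) (at y)"
proof -
  consider "y > 0" | "y < 0" | "y = 0" by linarith
  then show ?thesis
  proof cases
    case 1
    have "((\<lambda>z. z^2) has_real_derivative 2 * y) (at y)" by (auto intro!: derivative_eq_intros)
    then have "(mm has_real_derivative 2 * y) (at y)"
      by (rule has_field_derivative_transform_within_open[of _ _ _ "{0<..}" mm]) (use 1 in \<open>auto simp: mm_def\<close>)
    then show ?thesis using 1 by simp
  next
    case 2
    have "((\<lambda>z. 0) has_real_derivative 0) (at y)" by (auto intro!: derivative_eq_intros)
    then have "(mm has_real_derivative 0) (at y)"
      by (rule has_field_derivative_transform_within_open[of _ _ _ "{..<0}" mm]) (use 2 in \<open>auto simp: mm_def\<close>)
    then show ?thesis using 2 by simp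
  next
    case 3
    have ev: "eventually (\<lambda>h. max 0 h = (mm (0 + h) - mm 0) / h) (at (0::real))"
      unfolding eventually_at_filter
      by (rule always_eventually) (auto simp: mm_def max_def power2_eq_square)
    have "((\<lambda>h. max 0 h) \<longlongrightarrow> max 0 0) (at (0::real))"
      by (intro tendsto_intros)
    then have "((\<lambda>h. (mm (0 + h) - mm 0) / h) \<longlongrightarrow> 0) (at (0::real))"
      using tendsto_cong[OF ev] by simp
    then show ?thesis unfolding DERIV_def 3 by simp
  qed
qed

lemma C1_minus: "C1_on S f \<Longrightarrow> C1_on S (\<lambda>p. - f p)"
  using C1_scaleR[OF C1_const[of S "-1"], of f] by simp

lemma C1_diff: "C1_on S f \<Longrightarrow> C1_on S g \<Longrightarrow> C1_on S (\<lambda>p. f p - g p)"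
  using C1_add[of S f "\<lambda>p. - g p"] C1_minus[of S g] by simp

lemma C1_mult: "C1_on S (f::_\<Rightarrow>real) \<Longrightarrow> C1_on S g \<Longrightarrow> C1_on S (\<lambda>p. f p * g p)"
  using C1_scaleR[of S f g] by simp

lemma C1_mm: "C1_on S (f::_\<Rightarrow>real) \<Longrightarrow> C1_on S (\<lambda>p. mm (f p))"
  by (rule C1_comp[of S f UNIV mm "\<lambda>y. 2 * max 0 y"]) (auto intro!: mm_deriv continuous_on_mult continuous_on_max continuous_on_const continuous_on_id)

lemma C1_inverse: "C1_on S (f::_\<Rightarrow>real) \<Longrightarrow> (\<And>x. x \<in> S \<Longrightarrow> f x \<noteq> 0) \<Longrightarrow> C1_on S (\<lambda>p. inverse (f p))"
  by (rule C1_comp[of S f "-{0}" inverse "\<lambda>y. - inverse (y^2)"])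
     (auto intro!: derivative_eq_intros continuous_intros simp: power2_eq_square)

lemma C1_divide: "C1_on S (f::_\<Rightarrow>real) \<Longrightarrow> C1_on S g \<Longrightarrow> (\<And>x. x \<in> S \<Longrightarrow> g x \<noteq> 0) \<Longrightarrow> C1_on S (\<lambda>p. f p / g p)"
  using C1_mult[of S f "\<lambda>p. inverse (g p)"] C1_inverse[of S g] by (simp add: divide_inverse)

lemma C1_sqrt: "C1_on S (f::_\<Rightarrow>real) \<Longrightarrow> (\<And>x. x \<in> S \<Longrightarrow> f x > 0) \<Longrightarrow> C1_on S (\<lambda>p. sqrt (f p))"
  by (rule C1_comp[of S f "{0<..}" sqrt "\<lambda>y. inverse (sqrt y) / 2"])
     (auto intro!: DERIV_real_sqrt continuous_intros)

lemma C1_power: "C1_on S (f::_\<Rightarrow>real) \<Longrightarrow> C1_on S (\<lambda>p. f p ^ n)"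
  by (induction n) (auto intro: C1_mult C1_const)

lemma mk5_decomp: "mk5 a b c d e = a *\<^sub>R mk5 1 0 0 0 0 + b *\<^sub>R mk5 0 1 0 0 0 + c *\<^sub>R mk5 0 0 1 0 0
   + d *\<^sub>R mk5 0 0 0 1 0 + e *\<^sub>R mk5 0 0 0 0 1"
  by (simp add: vec5_eq)

lemma C1_mk5: "C1_on S f0 \<Longrightarrow> C1_on S f1 \<Longrightarrow> C1_on S f2 \<Longrightarrow> C1_on S f3 \<Longrightarrow> C1_on S f4 \<Longrightarrow>
  C1_on S (\<lambda>p. mk5 (f0 p) (f1 p) (f2 p) (f3 p) (f4 p))"
proof -
  have e: "(\<lambda>p. mk5 (f0 p) (f1 p) (f2 p) (f3 p) (f4 p)) = (\<lambda>p. f0 p *\<^sub>R mk5 1 0 0 0 0 + f1 p *\<^sub>R mk5 0 1 0 0 0 + f2 p *\<^sub>R mk5 0 0 1 0 0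
   + f3 p *\<^sub>R mk5 0 0 0 1 0 + f4 p *\<^sub>R mk5 0 0 0 0 1)"
    by (rule ext, rule mk5_decomp)
  assume "C1_on S f0" "C1_on S f1" "C1_on S f2" "C1_on S f3" "C1_on S f4"
  then show ?thesis unfolding e by (intro C1_add C1_scaleR C1_const)
qed



definition rho :: "real^5 \<Rightarrow> real" where "rho p = (p$1)^2 + (p$2)^2 + (p$3)^2 + (p$4)^2"
definition gg :: "real^5 \<Rightarrow> real" where "gg p = mm (rho p - (p$0)^2) / rho p"
definition bg :: "real \<Rightarrow> real^5 \<Rightarrow> real" where "bg a p = sqrt (1 - a^4 * (gg p)^2)"
definition Tf :: "real^5 \<Rightarrow> real^5" where
  "Tf p = (- ((rad p)^2 + (p$0)^2)) *\<^sub>R Ecyl p 1 - (2 * rad p * p$0) *\<^sub>R Ecyl p 0"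
definition fe :: "real \<Rightarrow> real^5 \<Rightarrow> nat \<Rightarrow> real^5" where
  "fe a p k =
     (if k = 0 then Ecyl p 0 - ((2 * p$0 / rad p) * (a^4 * gg p / (1 + bg a p))) *\<^sub>R Tf p
      else if k = 1 then Ecyl p 1 + (((rad p)^2 + (p$0)^2) / (rad p)^2 * (a^4 * gg p / (1 + bg a p))) *\<^sub>R Tf p
      else if k = 2 then inverse (rad p) *\<^sub>R Ecyl p 2
      else if k = 3 then inverse (rad p) *\<^sub>R Ecyl p 3
      else inverse (rad p * bg a p) *\<^sub>R Ecyl p 4)"

lemma rad_rho: "rad p = sqrt (rho p)" unfolding rad_def rho_def ..
lemma rho_sq: "rho p = (rad p)^2" using rad_sq[of p] by (simp add: rho_def)

lemma ro_sq: assumes "rad p \<noteq> 0" shows "(ro p)^2 = gg p"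
proof (cases "p \<in> Lcone")
  case True
  then have "rad p \<le> \<bar>p$0\<bar>" unfolding Lcone_def by simp
  then have "(rad p)^2 \<le> (p$0)^2" using rad_nonneg[of p] by (metis abs_ge_zero order_trans power2_abs power_mono)
  then show ?thesis using True by (simp add: ro_def gg_def mm_def rho_sq max_def)
next
  case False
  then have "rad p > \<bar>p$0\<bar>" unfolding Lcone_def by simp
  then have "(rad p)^2 > (p$0)^2" by (metis abs_ge_zero power2_abs power_strict_mono zero_less_numeral)
  then show ?thesis using False assms by (simp add: ro_def gg_def mm_def rho_sq max_def power_divide)
qed

lemma ro_nonneg: "ro p \<ge> 0"
proof (cases "p \<in> Lcone")
  case False
  then have "rad p > \<bar>p$0\<bar>" unfolding Lcone_def by simp
  then have "(rad p)^2 > (p$0)^2" by (metis abs_ge_zero power2_abs power_strict_mono zero_less_numeral)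
  then show ?thesis using False rad_nonneg[of p] by (simp add: ro_def)
qed (simp add: ro_def)

lemma frame_fe: assumes "rad p \<noteq> 0" "k < 5" shows "frame_e a p k = fe a p k"
proof -
  have "ro p ^ 4 = ((ro p)^2)^2" by simp
  then have b: "beta a p = bg a p" unfolding beta_def bg_def using ro_sq[OF assms(1)]
    by (simp add: power_mult_distrib)
  have cf: "cyl_frame p j = Ecyl p j" if "j < 5" for j using cyl_frame_eq[OF assms(1) that] .
  show ?thesis unfolding frame_e_def fe_def T_field_def Tf_def d_x0_def d_r_def d_sigma1_def d_sigma2_def d_sigma3_def
    by (simp add: cf b ro_sq[OF assms(1)])
qed

lemma C1_rho: "C1_on S rho"
  unfolding rho_def by (intro C1_add C1_power C1_nth)

lemma C1_rad: "(\<And>x. x \<in> S \<Longrightarrow> rad x > 0) \<Longrightarrow> C1_on S rad"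
  unfolding rad_rho by (rule C1_sqrt[OF C1_rho]) (metis rad_rho real_sqrt_gt_0_iff)

lemma C1_gg: "(\<And>x. x \<in> S \<Longrightarrow> rad x > 0) \<Longrightarrow> C1_on S gg"
  unfolding gg_def by (intro C1_divide C1_mm C1_diff C1_rho C1_power C1_nth) (metis rho_sq power_not_zero less_irrefl)


lemma Ba_gt_char:
  assumes a: "a > 0"
  shows "Ba_gt a = {p. 0 < rho p} \<inter> (\<lambda>p. a^2 * gg p) -` {..<1}"
proof (intro set_eqI iffI)
  fix p assume p: "p \<in> Ba_gt a"
  note F = Bgt_facts[OF a p]
  have "rho p > 0" using F(1) by (simp add: rho_sq)
  moreover have "(a * ro p)^2 < 1" using F(2,3) a
    by (metis abs_of_nonneg mult_nonneg_nonneg less_imp_le power2_abs power_less_one_iff zero_less_numeral)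
  then have "a^2 * gg p < 1" using ro_sq[of p] F(1) by (simp add: power_mult_distrib)
  ultimately show "p \<in> {p. 0 < rho p} \<inter> (\<lambda>p. a^2 * gg p) -` {..<1}" by simp
next
  fix p assume p: "p \<in> {p. 0 < rho p} \<inter> (\<lambda>p. a^2 * gg p) -` {..<1}"
  then have r: "rad p > 0" and g: "a^2 * gg p < 1" using rad_nonneg[of p] by (auto simp: rho_sq less_le)
  then have "(a * ro p)^2 < 1" using ro_sq[of p] by (simp add: power_mult_distrib)
  then have "a * ro p < 1" using ro_nonneg[of p] a
    by (metis abs_of_nonneg mult_nonneg_nonneg less_imp_le power2_abs power_less_one_iff zero_less_numeral)
  then have lt: "ro p < 1 / a" using a by (simp add: field_simps)
  have "p \<in> Ba a \<or> p \<in> Lcone"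
  proof (cases "p \<in> Lcone")
    case False
    then have "rad p > \<bar>p$0\<bar>" unfolding Lcone_def by simp
    then have "(rad p)^2 > (p$0)^2" by (metis abs_ge_zero power2_abs power_strict_mono zero_less_numeral)
    then have "ro p > 0" using False r by (simp add: ro_def)
    then show ?thesis using lt by (simp add: Ba_def)
  qed simp
  then show "p \<in> Ba_gt a" using r unfolding Ba_gt_def Ba_tilde_def by auto
qed

lemma open_Ba_gt:
  assumes a: "a > 0"
  shows "open (Ba_gt a)"
proof -
  have o1: "open {p. 0 < rho p}"
    using continuous_open_preimage[OF C1_cont[OF C1_rho] open_UNIV open_greaterThan, of 0]
    by (simp add: vimage_def)
  have "C1_on {p. 0 < rho p} (\<lambda>p. a^2 * gg p)"
    by (intro C1_mult C1_const C1_gg) (simp add: rho_sq rad_nonneg less_le)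
  then show ?thesis unfolding Ba_gt_char[OF a]
    by (rule continuous_open_preimage[OF C1_cont o1 open_lessThan])
qed


lemma C1_ifc: "(P \<Longrightarrow> C1_on S f) \<Longrightarrow> (\<not> P \<Longrightarrow> C1_on S g) \<Longrightarrow> C1_on S (\<lambda>p. if P then f p else g p)"
  by (cases P) auto

lemma C1_fe:
  assumes a: "a > 0"
  shows "C1_on (Ba_gt a) (\<lambda>p. fe a p k)"
proof -
  have pos: "rad x > 0" if "x \<in> Ba_gt a" for x using Bgt_facts[OF a that] by simp
  have bgp: "bg a x > 0" "1 - a^4 * (gg x)^2 > 0" if "x \<in> Ba_gt a" for x
  proof -
    note F = Bgt_facts[OF a that]
    have "ro x ^ 4 = ((ro x)^2)^2" by simp
    then have e: "beta a x = bg a x" "(a * ro x)^4 = a^4 * (gg x)^2"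
      unfolding beta_def bg_def using ro_sq[of x] F(1) by (simp_all add: power_mult_distrib)
    show b0: "bg a x > 0" using beta_facts[OF F(2) F(3) a] e by simp
    have p2: "(bg a x)^2 > 0" using b0 by simp
    have h: "(bg a x)^2 = 1 - a^4 * (gg x)^2" using beta_facts(2)[OF F(2) F(3) a] e by simp
    show "1 - a^4 * (gg x)^2 > 0" using p2 h by linarith
  qed
  have C1r: "C1_on (Ba_gt a) rad" by (rule C1_rad) (rule pos)
  have C1g: "C1_on (Ba_gt a) gg" by (rule C1_gg) (rule pos)
  have C1b: "C1_on (Ba_gt a) (bg a)" unfolding bg_def
    by (intro C1_sqrt C1_diff C1_const C1_mult C1_power C1g) (rule bgp)
  have nz: "rad x \<noteq> 0" "1 + bg a x \<noteq> 0" "(rad x)^2 \<noteq> 0" "rad x * bg a x \<noteq> 0" if "x \<in> Ba_gt a" for x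
  proof -
    have "rad x > 0" "bg a x > 0" using pos[OF that] bgp[OF that] by auto
    then show "rad x \<noteq> 0" "1 + bg a x \<noteq> 0" "(rad x)^2 \<noteq> 0" "rad x * bg a x \<noteq> 0" by simp_all
  qed
  show ?thesis unfolding fe_def Tf_def Ecyl_def
    apply (intro C1_ifc C1_add C1_diff C1_minus C1_scaleR C1_mk5 C1_const C1_nth C1_divide C1_mult C1_power
       C1_inverse C1r C1g C1b)
    apply (metis nz)+
    done
qed

lemma C1_frame:
  assumes a: "a > 0" and k: "k < 5"
  shows "C1_on (Ba_gt a) (\<lambda>p. frame_e a p k)"
proof (rule C1_transfer[OF C1_fe[OF a] open_Ba_gt[OF a]])
  fix x assume "x \<in> Ba_gt a"
  then have "rad x \<noteq> 0" using Bgt_facts(1)[OF a] by force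
  then show "frame_e a x k = fe a x k" by (rule frame_fe[OF _ k])
qed


theorem lemma1:
  fixes a :: real
  assumes "a > 0"
  shows "(\<forall>p\<in>Ba_gt a. orthonormal_wrt (g_a a p) (frame_e a p))
         \<and> (\<forall>k<5. C1_on (Ba_gt a) (\<lambda>p. frame_e a p k))"
  using orthonormal_part[OF assms] C1_frame[OF assms] by blast

end
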